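(* The CDF of $\gamma_{R,j}$ can be derived in closed form as $$F_{\gamma_{R,j}}(\psi_j) = 1 - \frac{\lambda_z e^{-\lambda_x(\mathcal{M}_\Delta + \mathcal{L})}}{\lambda_z + \lambda_x \mathcal{K}_\Delta}\left(1 - e^{-\lambda_y \Lambda_S}\right) + \frac{\lambda_y \lambda_z\, \mathrm{Ei}[-\mu_S \xi_S]}{\lambda_x \mathcal{K}_\Upsilon}\, e^{-\Lambda_S(\lambda_y + \lambda_x \mathcal{M}_\Upsilon) - \lambda_x \mathcal{L} + \mu_S \xi_S},$$ valid for $\psi_j < \alpha_j/\mathcal{A}$; otherwise $F_{\gamma_{R,j}}(\psi_j) \approx 1$.
   Context: Underlay cognitive-radio NOMA downlink: a secondary source $S$ sends the superposed signal $\sum_{b=1}^B \sqrt{\alpha_b} x_b$ (power allocation $\alpha_1 > \dots > \alpha_B$, $\sum_b \alpha_b = 1$) to a decode-and-forward relay $R$, while a primary transmitter $T$ (power $P_T$) interferes and a primary destination $D$ imposes an interference temperature constraint $I_{\text{ITC}}$. The source power is $P_S = \min(\bar{P}_S, I_{\text{ITC}} d_{SD}^{\tau}/|\bar{h}_{SD}|^2)$. Channels use imperfect-CSI model $\bar h_i = h_i + e_i$, $e_i \sim \mathcal{CN}(0,\zeta_i)$; $\phi$ denote aggregate hardware-impairment levels; $0<\epsilon_n<1$ is the residual imperfect-SIC factor (written $\backepsilon_n$ in the paper); $d_i$ are distances, $\tau$ the path-loss exponent, $\sigma_R^2$ the noise variance at $R$. The SIDNR at $R$ for decoding $x_j$ ($1\le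 j<B$) is $\gamma_{R,j} = \dfrac{\alpha_j P_S |h_{SR}|^2}{\mathcal{A} P_S |h_{SR}|^2 + \mathcal{C} P_S + \mathcal{D}_R \tilde{P}_T |\bar h_{TR}|^2 + d_{SR}^{\tau}\sigma_R^2}$, with $\mathcal{A} = \sum_{n=j+1}^B \alpha_n + \sum_{n=1}^{j-1} \epsilon_n \alpha_n + \phi_{SR}^2$, $\mathcal{C} = \zeta_{SR}(1+\phi_{SR}^2)$, $\mathcal{D}_R = d_{SR}^{\tau} d_{TR}^{-\tau}(1+\phi_{TR}^2)$, $\tilde P_T = P_T/d_{TR}^{\tau}$. Let $X=|h_{SR}|^2$, $Y=|\bar h_{SD}|^2$, $Z=|\bar h_{TR}|^2$ be independent exponential RVs with rates $\lambda_x,\lambda_y,\lambda_z$. Define $\mathcal{K}_\Delta = \frac{\mathcal{D}_R \tilde P_T \psi_j}{\bar P_S(\alpha_j - \mathcal{A}\psi_j)}$, $\mathcal{M}_\Delta = \frac{\psi_j d_{SR}^{\tau}\sigma_R^2}{\bar P_S(\alpha_j - \mathcal{A}\psi_j)}$, and $\mathcal{K}_\Upsilon$, $\mathcal{M}_\Upsilon$ the same expressions with $\bar P_S$ replaced by $I_{\text{ITC}} d_{SD}^{\tau}$; $\mathcal{L} = \frac{\mathcal{C}\psi_j}{\alpha_j - \mathcal{A}\psi_j}$; $\Lambda_S = I_{\text{ITC}} d_{SD}^{\tau}/\bar P_S$; $\mu_S = \lambda_z + \lambda_x \Lambda_S \mathcal{K}_\Upsilon$; $\xi_S = \mathcal{M}_\Upsilon/\mathcal{K}_\Upsilon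 + \lambda_y/(\lambda_x \mathcal{K}_\Upsilon)$. The CDF decomposes as $F_{\gamma_{R,j}}(\psi_j) = \Pr[X < Z\mathcal{K}_\Delta + \mathcal{M}_\Delta + \mathcal{L},\, Y<\Lambda_S] + \Pr[X < ZY\mathcal{K}_\Upsilon + Y\mathcal{M}_\Upsilon + \mathcal{L},\, Y>\Lambda_S]$. $\mathrm{Ei}[\cdot]$ is the exponential integral function. *)

theory Defs
  imports "HOL-Probability.Probability"
begin

text \<open>Exponential integral, negative-argument branch:
  Ei(x) = - integral from -x to infinity of exp(-t)/t dt  (used only for x < 0).\<close>
definition Ei :: "real \<Rightarrow> real" where
  "Ei x = - (LBINT t:{-x<..}. exp (- t) / t)"

text \<open>Source transmit power P_S = min(Pbar_S, I_ITC d_SD^tau / |hbar_SD|^2), with y = |hbar_SD|^2.\<close>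
definition source_power :: "real \<Rightarrow> real \<Rightarrow> real \<Rightarrow> real \<Rightarrow> real \<Rightarrow> real" where
  "source_power PSbar Iitc dSD tau y = min PSbar (Iitc * dSD powr tau / y)"

text \<open>SIDNR at R for decoding x_j, with x = |h_SR|^2, y = |hbar_SD|^2, z = |hbar_TR|^2;
  A, C, D_R, PTt = tilde P_T, and N = d_SR^tau sigma_R^2 are the coefficients of the paper.\<close>
definition sidnr_R :: "real \<Rightarrow> real \<Rightarrow> real \<Rightarrow> real \<Rightarrow> real \<Rightarrow> real \<Rightarrow> real
                      \<Rightarrow> real \<Rightarrow> real \<Rightarrow> real \<Rightarrow> real \<Rightarrow> real \<Rightarrow> real \<Rightarrow> real" where
  "sidnr_R alpha_j A C DR PTt N PSbar Iitc dSD tau x y z =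
     (let PS = source_power PSbar Iitc dSD tau y in
      alpha_j * PS * x / (A * PS * x + C * PS + DR * PTt * z + N))"

end

theory Submission
  imports Defs
begin

lemma exp_dist_id:
  assumes l: "0 < l"
  shows "distributed (density lborel (exponential_density l)) lborel (\<lambda>x. x) (exponential_density l)"
  unfolding distributed_def
  by (auto simp: distr_id2 intro!: distr_id2 borel_measurable_erlang_density)

lemma exp_tail:
  assumes l: "0 < l" and a: "0 \<le> a"
  shows "(\<integral>\<^sup>+x. ennreal (exponential_density l x) * indicator {a<..} x \<partial>lborel) = ennreal (exp (- a * l))"
proof -
  interpret P: prob_space "density lborel (exponential_density l)"
    using prob_space_exponential_density[OF l] .
  have "P.prob {x \<in> space (density lborel (exponential_density l)). a < x} = exp (- a * l)"
    using P.exponential_distributedD_gt[OF exp_dist_id[OF l] a l] by simp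
  moreover have "{x \<in> space (density lborel (exponential_density l)). a < x} = {a<..}" by auto
  ultimately have "emeasure (density lborel (exponential_density l)) {a<..} = ennreal (exp (- a * l))"
    by (metis P.emeasure_eq_measure)
  then show ?thesis by (simp add: emeasure_density)
qed

lemma exp_total:
  assumes l: "0 < l"
  shows "(\<integral>\<^sup>+x. ennreal (exponential_density l x) \<partial>lborel) = 1"
proof -
  interpret P: prob_space "density lborel (exponential_density l)"
    using prob_space_exponential_density[OF l] .
  have "emeasure (density lborel (exponential_density l)) UNIV = 1"
    using P.emeasure_space_1 by simp
  then show ?thesis by (simp add: emeasure_density)
qed

lemma exp_le:
  assumes l: "0 < l" and a: "0 \<le> a"
  shows "(\<integral>\<^sup>+x. ennreal (exponential_density l x) * indicator {..a} x \<partial>lborel) = ennreal (1 - exp (- a * l))"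
proof -
  have "(\<integral>\<^sup>+x. ennreal (exponential_density l x) * indicator {..a} x \<partial>lborel) + (\<integral>\<^sup>+x. ennreal (exponential_density l x) * indicator {a<..} x \<partial>lborel)
     = (\<integral>\<^sup>+x. ennreal (exponential_density l x) * indicator {..a} x + ennreal (exponential_density l x) * indicator {a<..} x \<partial>lborel)"
    by (rule nn_integral_add[symmetric]) auto
  also have "\<dots> = (\<integral>\<^sup>+x. ennreal (exponential_density l x) \<partial>lborel)"
    by (rule nn_integral_cong) (auto simp: indicator_def)
  also have "\<dots> = 1" by (rule exp_total[OF l])
  finally have "(\<integral>\<^sup>+x. ennreal (exponential_density l x) * indicator {..a} x \<partial>lborel) + ennreal (exp (- a * l)) = 1"
    using exp_tail[OF l a] by simp
  then show ?thesis
    by (metis add_diff_eq_iff_ennreal ennreal_1 ennreal_minus exp_ge_zero exp_le_one_iff le_add2 mult_nonneg_nonneg neg_le_0_iff_le order_less_imp_le l a top_neq_ennreal ennreal_add_diff_cancel_right)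
qed

lemma exp_laplace:
  assumes l: "0 < l" and c: "0 \<le> c"
  shows "(\<integral>\<^sup>+z. ennreal (exponential_density l z) * ennreal (exp (- c * z)) \<partial>lborel) = ennreal (l / (l + c))"
proof -
  have "(\<integral>\<^sup>+z. ennreal (exponential_density l z) * ennreal (exp (- c * z)) \<partial>lborel)
      = (\<integral>\<^sup>+z. ennreal (l / (l + c)) * ennreal (exponential_density (l + c) z) \<partial>lborel)"
  proof (rule nn_integral_cong)
    fix z :: real
    have "exponential_density l z * exp (- c * z) = l / (l + c) * exponential_density (l + c) z"
    proof (cases "z < 0")
      case False
      have "exp (- z * l) * exp (- c * z) = exp (- z * (l + c))"
        by (simp add: exp_add[symmetric] algebra_simps)
      then show ?thesis using False l c by (simp add: exponential_density_def)
    qed (simp add: exponential_density_def)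
    then show "ennreal (exponential_density l z) * ennreal (exp (- c * z)) = ennreal (l / (l + c)) * ennreal (exponential_density (l + c) z)"
      using l c by (simp add: ennreal_mult'[symmetric] exponential_density_nonneg ennreal_mult[symmetric])
  qed
  also have "\<dots> = ennreal (l / (l + c)) * (\<integral>\<^sup>+z. ennreal (exponential_density (l + c) z) \<partial>lborel)"
    by (rule nn_integral_cmult) simp
  also have "\<dots> = ennreal (l / (l + c))" using exp_total[of "l + c"] l c by simp
  finally show ?thesis .
qed

lemma ei_tail:
  assumes b: "0 < b"
  shows "(\<integral>\<^sup>+t. ennreal (exp (- t) / t) * indicator {b<..} t \<partial>lborel) = ennreal (- Ei (- b))"
proof -
  let ?f = "\<lambda>t. indicator {b<..} t *\<^sub>R (exp (- t) / t) :: real"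
  have fin: "(\<integral>\<^sup>+t. ennreal (exp (- t) / t) * indicator {b<..} t \<partial>lborel) \<le> (\<integral>\<^sup>+t. ennreal (1 / b) * ennreal (exponential_density 1 t) \<partial>lborel)"
  proof (rule nn_integral_mono)
    fix t :: real
    show "ennreal (exp (- t) / t) * indicator {b<..} t \<le> ennreal (1 / b) * ennreal (exponential_density 1 t)"
    proof (cases "b < t")
      case True
      then have "exp (- t) / t \<le> exp (- t) / b"
        using b by (intro divide_left_mono) auto
      then have "exp (- t) / t \<le> 1 / b * exponential_density 1 t"
        using True b by (simp add: exponential_density_def)
      moreover have "ennreal (1 / b) * ennreal (exponential_density 1 t) = ennreal (1 / b * exponential_density 1 t)"
        using b by (subst ennreal_mult[symmetric]) (auto simp: exponential_density_nonneg)
      ultimately show ?thesis using True by (simp add: ennreal_leI)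
    qed simp
  qed
  also have "\<dots> = ennreal (1 / b)" using exp_total[of 1] by (simp add: nn_integral_cmult)
  finally have lt: "(\<integral>\<^sup>+t. ennreal (exp (- t) / t) * indicator {b<..} t \<partial>lborel) < \<infinity>"
    by (simp add: le_less_trans)
  have eq: "(\<integral>\<^sup>+t. ennreal (?f t) \<partial>lborel) = (\<integral>\<^sup>+t. ennreal (exp (- t) / t) * indicator {b<..} t \<partial>lborel)"
    by (rule nn_integral_cong) (auto simp: indicator_def)
  have "(LBINT t:{b<..}. exp (- t) / t) = integral\<^sup>L lborel ?f"
    by (simp add: set_lebesgue_integral_def)
  also have "\<dots> = enn2real (\<integral>\<^sup>+t. ennreal (?f t) \<partial>lborel)"
  proof (rule integral_eq_nn_integral)
    show "?f \<in> borel_measurable lborel" by measurable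
    show "AE x in lborel. 0 \<le> ?f x" using b by (intro AE_I2) (simp add: indicator_def)
  qed
  finally have "- Ei (- b) = enn2real (\<integral>\<^sup>+t. ennreal (exp (- t) / t) * indicator {b<..} t \<partial>lborel)"
    using eq by (simp add: Ei_def)
  then show ?thesis using lt by simp
qed


lemma event_equiv:
  fixes al A C DR PTt N PSbar Iitc dSD tau psi x y z :: real
  assumes A: "0 < A" and C: "0 \<le> C" and DR: "0 \<le> DR" and PTt: "0 \<le> PTt" and N: "0 < N"
    and PSbar: "0 < PSbar" and P0: "0 < Iitc * dSD powr tau" and psi: "0 < psi" and al: "A * psi < al"
    and y: "0 < y" and z: "0 \<le> z" and x: "0 \<le> x"
  shows "psi < sidnr_R al A C DR PTt N PSbar Iitc dSD tau x y z \<longleftrightarrow>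
    C * psi / (al - A * psi) + (if y \<le> Iitc * dSD powr tau / PSbar
       then DR * PTt * psi / (PSbar * (al - A * psi)) * z + psi * N / (PSbar * (al - A * psi))
       else y * (DR * PTt * psi / (Iitc * dSD powr tau * (al - A * psi)) * z + psi * N / (Iitc * dSD powr tau * (al - A * psi)))) < x"
proof -
  define P0 where "P0 = Iitc * dSD powr tau"
  define PS where "PS = source_power PSbar Iitc dSD tau y"
  define d where "d = al - A * psi"
  have d: "0 < d" using al by (simp add: d_def)
  have PS: "PS = (if y \<le> P0 / PSbar then PSbar else P0 / y)"
    using y PSbar by (auto simp: PS_def source_power_def P0_def min_def field_simps)
  have PSpos: "0 < PS" using PS P0 y PSbar by (auto simp: P0_def)
  have Dpos: "0 < A * PS * x + C * PS + DR * PTt * z + N"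
    using A C DR PTt N PSpos x z by (intro add_nonneg_pos) (auto intro!: add_nonneg_nonneg mult_nonneg_nonneg)
  have "psi < sidnr_R al A C DR PTt N PSbar Iitc dSD tau x y z \<longleftrightarrow>
        psi < al * PS * x / (A * PS * x + C * PS + DR * PTt * z + N)"
    by (simp add: sidnr_R_def PS_def Let_def)
  also have "\<dots> \<longleftrightarrow> psi * (A * PS * x + C * PS + DR * PTt * z + N) < al * PS * x"
    using Dpos by (simp add: pos_less_divide_eq)
  also have "\<dots> \<longleftrightarrow> psi * (C * PS + DR * PTt * z + N) < PS * d * x"
    by (simp add: d_def algebra_simps)
  also have "\<dots> \<longleftrightarrow> psi * (C * PS + DR * PTt * z + N) / (PS * d) < x"
    using PSpos d by (simp add: pos_divide_less_eq mult.commute)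
  also have "psi * (C * PS + DR * PTt * z + N) / (PS * d) = C * psi / d + psi * (DR * PTt * z + N) / (PS * d)"
    using PSpos d by (simp add: field_simps)
  finally have *: "psi < sidnr_R al A C DR PTt N PSbar Iitc dSD tau x y z \<longleftrightarrow>
     C * psi / d + psi * (DR * PTt * z + N) / (PS * d) < x" .
  show ?thesis
  proof (cases "y \<le> P0 / PSbar")
    case True
    have "psi * (DR * PTt * z + N) / (PS * d) = DR * PTt * psi / (PSbar * d) * z + psi * N / (PSbar * d)"
      using True PS PSbar d by (simp add: field_simps)
    then show ?thesis using * True by (simp add: d_def P0_def)
  next
    case False
    have "psi * (DR * PTt * z + N) / (PS * d) = y * (DR * PTt * psi / (P0 * d) * z + psi * N / (P0 * d))"
    proof -
      have PSe: "PS = P0 / y" using False PS by simp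
      have P0p: "0 < P0" using P0 by (simp add: P0_def)
      show ?thesis unfolding PSe using P0p d y by (simp add: field_simps)
    qed
    then show ?thesis using * False by (simp add: d_def P0_def)
  qed
qed


lemma indep_parts:
  fixes X Y Z :: "'w \<Rightarrow> real"
  assumes prob: "prob_space M"
    and indep: "prob_space.indep_vars M (\<lambda>_. borel) (\<lambda>i::nat. if i = 0 then X else if i = 1 then Y else Z) {0, 1, 2}"
  shows "distr M lborel X \<Otimes>\<^sub>M distr M (lborel \<Otimes>\<^sub>M lborel) (\<lambda>w. (Y w, Z w))
          = distr M (lborel \<Otimes>\<^sub>M (lborel \<Otimes>\<^sub>M lborel)) (\<lambda>w. (X w, (Y w, Z w)))"
    and "prob_space.indep_var M lborel Y lborel Z"
proof -
  interpret P: prob_space M by (rule prob)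
  let ?V = "\<lambda>i::nat. if i = 0 then X else if i = 1 then Y else Z"
  let ?R0 = "\<lambda>\<omega>. restrict (\<lambda>i. ?V i \<omega>) {0}"
  let ?R12 = "\<lambda>\<omega>. restrict (\<lambda>i. ?V i \<omega>) {1,2}"
  let ?P0 = "PiM {0::nat} (\<lambda>_. borel) :: (nat \<Rightarrow> real) measure"
  let ?P12 = "PiM {1::nat,2} (\<lambda>_. borel) :: (nat \<Rightarrow> real) measure"
  have r1: "P.indep_var ?P0 ?R0 ?P12 ?R12"
    by (rule P.indep_var_restrict[OF indep]) auto
  note rv0 = P.indep_var_rv1[OF r1] and rv12 = P.indep_var_rv2[OF r1]
  have eq: "distr M ?P0 ?R0 \<Otimes>\<^sub>M distr M ?P12 ?R12 = distr M (?P0 \<Otimes>\<^sub>M ?P12) (\<lambda>x. (?R0 x, ?R12 x))"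
    using P.indep_var_distribution_eq[THEN iffD1, OF r1] by (elim conjE)
  have m1: "(\<lambda>f. f 0) \<in> measurable ?P0 (lborel :: real measure)"
    by measurable
  have m2: "(\<lambda>f. (f 1, f 2)) \<in> measurable ?P12 (lborel \<Otimes>\<^sub>M (lborel :: real measure))"
    by measurable
  have mphi: "(\<lambda>(f, g). (f 0, (g 1, g 2))) \<in> measurable (?P0 \<Otimes>\<^sub>M ?P12) (lborel \<Otimes>\<^sub>M (lborel \<Otimes>\<^sub>M lborel))"
    by measurable
  have sf: "sigma_finite_measure (distr (distr M ?P12 ?R12) (lborel \<Otimes>\<^sub>M lborel) (\<lambda>f. (f 1, f 2)))"
  proof -
    interpret Q: prob_space "distr (distr M ?P12 ?R12) (lborel \<Otimes>\<^sub>M lborel) (\<lambda>f. (f 1, f 2))"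
      by (rule prob_space.prob_space_distr[OF P.prob_space_distr[OF rv12]]) (simp add: m2)
    show ?thesis by unfold_locales
  qed
  have "distr M lborel X \<Otimes>\<^sub>M distr M (lborel \<Otimes>\<^sub>M lborel) (\<lambda>w. (Y w, Z w))
      = distr (distr M ?P0 ?R0) lborel (\<lambda>f. f 0) \<Otimes>\<^sub>M distr (distr M ?P12 ?R12) (lborel \<Otimes>\<^sub>M lborel) (\<lambda>f. (f 1, f 2))"
    using rv0 rv12 m1 m2 by (simp add: distr_distr comp_def)
  also have "\<dots> = distr (distr M ?P0 ?R0 \<Otimes>\<^sub>M distr M ?P12 ?R12) (lborel \<Otimes>\<^sub>M (lborel \<Otimes>\<^sub>M lborel)) (\<lambda>(f, g). (f 0, (g 1, g 2)))"
  proof -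
    have a: "(\<lambda>f. f 0) \<in> measurable (distr M ?P0 ?R0) (lborel :: real measure)" using m1 by simp
    have b: "(\<lambda>f. (f 1, f 2)) \<in> measurable (distr M ?P12 ?R12) (lborel \<Otimes>\<^sub>M (lborel :: real measure))" using m2 by simp
    show ?thesis by (subst pair_measure_distr[OF a b sf]) (simp add: case_prod_beta)
  qed
  also have "\<dots> = distr M (lborel \<Otimes>\<^sub>M (lborel \<Otimes>\<^sub>M lborel)) (\<lambda>w. (X w, (Y w, Z w)))"
    unfolding eq using rv0 rv12 mphi by (subst distr_distr) (auto simp: comp_def)
  finally show "distr M lborel X \<Otimes>\<^sub>M distr M (lborel \<Otimes>\<^sub>M lborel) (\<lambda>w. (Y w, Z w))
          = distr M (lborel \<Otimes>\<^sub>M (lborel \<Otimes>\<^sub>M lborel)) (\<lambda>w. (X w, (Y w, Z w)))" .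
  have r2: "P.indep_var (PiM {1} (\<lambda>_. borel)) (\<lambda>\<omega>. restrict (\<lambda>i. ?V i \<omega>) {1})
                        (PiM {2} (\<lambda>_. borel)) (\<lambda>\<omega>. restrict (\<lambda>i. ?V i \<omega>) {2})"
    by (rule P.indep_var_restrict[OF indep]) auto
  have m3: "(\<lambda>f. f 1) \<in> measurable (PiM {1::nat} (\<lambda>_. borel)) (lborel :: real measure)"
    by measurable
  have m4: "(\<lambda>f. f 2) \<in> measurable (PiM {2::nat} (\<lambda>_. borel)) (lborel :: real measure)"
    by measurable
  have "P.indep_var lborel ((\<lambda>f. f 1) \<circ> (\<lambda>\<omega>. restrict (\<lambda>i. ?V i \<omega>) {1}))
          lborel ((\<lambda>f. f 2) \<circ> (\<lambda>\<omega>. restrict (\<lambda>i. ?V i \<omega>) {2}))"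
    by (rule P.indep_var_compose[OF r2 m3 m4])
  moreover have "((\<lambda>f. f 1) \<circ> (\<lambda>\<omega>. restrict (\<lambda>i. ?V i \<omega>) {1})) = Y" by (simp add: fun_eq_iff)
  moreover have "((\<lambda>f. f 2) \<circ> (\<lambda>\<omega>. restrict (\<lambda>i. ?V i \<omega>) {2})) = Z" by (simp add: fun_eq_iff)
  ultimately show "P.indep_var lborel Y lborel Z" by simp
qed


lemma ei_shift:
  assumes c: "0 < c" and a: "0 < a" and s: "0 \<le> s"
  shows "(\<integral>\<^sup>+y. ennreal (exp (- c * y) / (y + a)) * indicator {s<..} y \<partial>lborel)
       = ennreal (exp (c * a) * (- Ei (- (c * (s + a)))))"
proof -
  define b where "b = c * (s + a)"
  have b: "0 < b" using c a s by (simp add: b_def)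
  let ?g = "\<lambda>u. ennreal (exp (- u) / u) * indicator {b<..} u"
  let ?L = "(\<integral>\<^sup>+y. ennreal (exp (- c * y) / (y + a)) * indicator {s<..} y \<partial>lborel)"
  have gm: "?g \<in> borel_measurable borel" by measurable
  have "(\<integral>\<^sup>+u. ?g u \<partial>lborel) = ennreal \<bar>c\<bar> * (\<integral>\<^sup>+y. ?g (c * a + c * y) \<partial>lborel)"
    by (rule nn_integral_real_affine[OF gm]) (use c in simp)
  also have "(\<integral>\<^sup>+y. ?g (c * a + c * y) \<partial>lborel)
      = (\<integral>\<^sup>+y. ennreal (exp (- (c * a)) / c) * (ennreal (exp (- c * y) / (y + a)) * indicator {s<..} y) \<partial>lborel)"
  proof (rule nn_integral_cong)
    fix y :: real
    show "?g (c * a + c * y) = ennreal (exp (- (c * a)) / c) * (ennreal (exp (- c * y) / (y + a)) * indicator {s<..} y)"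
    proof (cases "s < y")
      case True
      have pos: "0 < y + a" using True s a by simp
      have lt: "b < c * a + c * y" using True c by (simp add: b_def algebra_simps)
      have "exp (- (c * a + c * y)) / (c * a + c * y) = exp (- (c * a)) / c * (exp (- c * y) / (y + a))"
      proof -
        have e: "exp (- (c * a + c * y)) = exp (- (c * a)) * exp (- c * y)"
          by (simp add: exp_add[symmetric])
        have d: "c * a + c * y = c * (y + a)" by (simp add: algebra_simps)
        have "exp (- (c * a + c * y)) / (c * a + c * y) = exp (- (c * a)) * exp (- c * y) / (c * (y + a))"
          by (subst e, subst d, rule refl)
        also have "\<dots> = exp (- (c * a)) / c * (exp (- c * y) / (y + a))"
          using c pos by simp
        finally show ?thesis .
      qed
      then show ?thesis using True lt c pos
        by (simp add: ennreal_mult[symmetric])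
    next
      case False
      have "\<not> b < c * a + c * y" using False c by (simp add: b_def algebra_simps)
      then show ?thesis using False by simp
    qed
  qed
  also have "\<dots> = ennreal (exp (- (c * a)) / c) * ?L"
    by (rule nn_integral_cmult) simp
  finally have "(\<integral>\<^sup>+u. ?g u \<partial>lborel) = ennreal c * (ennreal (exp (- (c * a)) / c) * ?L)"
    using c by simp
  also have "\<dots> = ennreal (exp (- (c * a))) * ?L"
    using c by (simp add: mult.assoc[symmetric] ennreal_mult[symmetric])
  finally have Q: "ennreal (- Ei (- b)) = ennreal (exp (- (c * a))) * ?L"
    using ei_tail[OF b] by simp
  have "?L = ennreal (exp (c * a)) * (ennreal (exp (- (c * a))) * ?L)"
    by (simp add: mult.assoc[symmetric] ennreal_mult[symmetric] exp_minus)
  also have "\<dots> = ennreal (exp (c * a)) * ennreal (- Ei (- b))" using Q by simp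
  also have "\<dots> = ennreal (exp (c * a) * (- Ei (- b)))"
    by (rule ennreal_mult'[symmetric]) simp
  finally show ?thesis by (simp add: b_def)
qed

lemma Ei_neg_nonpos:
  assumes "0 < b"
  shows "Ei (- b) \<le> 0"
proof -
  have "0 \<le> (LBINT t:{b<..}. exp (- t) / t)"
    unfolding set_lebesgue_integral_def using assms
    by (intro integral_nonneg_AE AE_I2) (auto simp: indicator_def)
  then show ?thesis by (simp add: Ei_def)
qed

theorem proposition1:
  fixes M :: "'w measure"
    and X Y Z :: "'w \<Rightarrow> real"
    and alpha eps :: "nat \<Rightarrow> real"
    and B j :: nat
    and phiSR phiTR zetaSR dSR dTR dSD tau sigR2 PT PSbar Iitc lx ly lz psi
        A C DR PTt KD MD KU MU L LamS muS xiS :: real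
  assumes prob: "prob_space M"
    and distX: "distributed M lborel X (exponential_density lx)"
    and distY: "distributed M lborel Y (exponential_density ly)"
    and distZ: "distributed M lborel Z (exponential_density lz)"
    and indep: "prob_space.indep_vars M (\<lambda>_. borel) (\<lambda>i::nat. if i = 0 then X else if i = 1 then Y else Z) {0, 1, 2}"
    and lpos: "lx > 0" "ly > 0" "lz > 0"
    and j: "1 \<le> j" "j < B"
    and alpha_pos: "\<forall>n\<in>{1..B}. alpha n > 0"
    and alpha_dec: "\<forall>n\<in>{1..<B}. alpha n > alpha (Suc n)"
    and alpha_sum: "(\<Sum>n=1..B. alpha n) = 1"
    and eps: "\<forall>n. 0 < eps n \<and> eps n < 1"
    and hw: "phiSR \<ge> 0" "phiTR \<ge> 0"
    and csi: "zetaSR \<ge> 0"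
    and dist: "dSR > 0" "dTR > 0" "dSD > 0"
    and tau: "tau > 0"
    and noise: "sigR2 > 0"
    and powers: "PT > 0" "PSbar > 0" "Iitc > 0"
    and psi_pos: "psi > 0"
    and psi_lt: "psi < alpha j / A"
    and A_def: "A =  (\<Sum>n=j+1..B. alpha n) + (\<Sum>n=1..<j. eps n * alpha n) + phiSR^2"
    and C_def: "C = zetaSR * (1 + phiSR^2)"
    and DR_def: "DR = dSR powr tau * dTR powr (- tau) * (1 + phiTR^2)"
    and PTt_def: "PTt = PT / dTR powr tau"
    and KD_def: "KD = DR * PTt * psi / (PSbar * (alpha j - A * psi))"
    and MD_def: "MD = psi * dSR powr tau * sigR2 / (PSbar * (alpha j - A * psi))"
    and KU_def: "KU = DR * PTt * psi / (Iitc * dSD powr tau * (alpha j - A * psi))"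
    and MU_def: "MU = psi * dSR powr tau * sigR2 / (Iitc * dSD powr tau * (alpha j - A * psi))"
    and L_def: "L = C * psi / (alpha j - A * psi)"
    and LamS_def: "LamS = Iitc * dSD powr tau / PSbar"
    and muS_def: "muS = lz + lx * LamS * KU"
    and xiS_def: "xiS = MU / KU + ly / (lx * KU)"
  shows "measure M {w \<in> space M.
            sidnr_R (alpha j) A C DR PTt (dSR powr tau * sigR2) PSbar Iitc dSD tau (X w) (Y w) (Z w) \<le> psi}
         = 1 - lz * exp (- lx * (MD + L)) / (lz + lx * KD) * (1 - exp (- ly * LamS))
             + ly * lz * Ei (- muS * xiS) / (lx * KU)
               * exp (- LamS * (ly + lx * MU) - lx * L + muS * xiS)"
proof -
  interpret P: prob_space M by (rule prob)
  have alj: "0 < alpha j" using alpha_pos j by auto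
  have s1: "0 < (\<Sum>n=j+1..B. alpha n)"
    using alpha_pos j by (intro sum_pos) auto
  have s2: "0 \<le> (\<Sum>n=1..<j. eps n * alpha n)"
    using alpha_pos eps j by (intro sum_nonneg) (auto intro!: mult_nonneg_nonneg less_imp_le)
  have Apos: "0 < A" using s1 s2 A_def by (simp add: add_pos_nonneg)
  have dpos: "0 < alpha j - A * psi"
    using psi_lt Apos by (simp add: pos_less_divide_eq mult.commute)
  have DRpos: "0 < DR" unfolding DR_def using dist
    by (intro mult_pos_pos) (auto simp: add_pos_nonneg)
  have PTtpos: "0 < PTt" using PTt_def powers dist by simp
  have P0pos: "0 < Iitc * dSD powr tau" using powers dist by simp
  have Npos: "0 < dSR powr tau * sigR2" using dist noise by simp
  have Cnn: "0 \<le> C" using C_def csi by simp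
  have LamSpos: "0 < LamS" using LamS_def P0pos powers by simp
  have KDnn: "0 \<le> KD" unfolding KD_def using DRpos PTtpos psi_pos powers dpos
    by (intro divide_nonneg_nonneg mult_nonneg_nonneg) auto
  have MDnn: "0 \<le> MD" unfolding MD_def using Npos psi_pos powers dpos dist noise
    by (intro divide_nonneg_nonneg mult_nonneg_nonneg) auto
  have KUpos: "0 < KU" unfolding KU_def using DRpos PTtpos psi_pos P0pos dpos powers dist
    by (intro divide_pos_pos mult_pos_pos) auto
  have MUnn: "0 \<le> MU" unfolding MU_def using Npos psi_pos P0pos dpos dist noise powers
    by (intro divide_nonneg_nonneg mult_nonneg_nonneg) auto
  have Lnn: "0 \<le> L" unfolding L_def using Cnn psi_pos dpos
    by (intro divide_nonneg_nonneg mult_nonneg_nonneg) auto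
  note ip = indep_parts[OF prob indep]
  have sfl: "sigma_finite_measure (lborel :: real measure)" by (rule sigma_finite_lborel)
  have sfl2: "sigma_finite_measure (lborel \<Otimes>\<^sub>M lborel :: (real \<times> real) measure)"
    by (rule sigma_finite_pair_measure[OF sfl sfl])
  have dYZ: "distributed M (lborel \<Otimes>\<^sub>M lborel) (\<lambda>w. (Y w, Z w))
      (\<lambda>(y, z). ennreal (exponential_density ly y) * ennreal (exponential_density lz z))"
    by (rule P.distributed_joint_indep[OF sfl sfl distY distZ ip(2)])
  have dXYZ: "distributed M (lborel \<Otimes>\<^sub>M (lborel \<Otimes>\<^sub>M lborel)) (\<lambda>w. (X w, (Y w, Z w)))
      (\<lambda>(x, q). ennreal (exponential_density lx x) * (case q of (y, z) \<Rightarrow> ennreal (exponential_density ly y) * ennreal (exponential_density lz z)))"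
    by (rule P.distributed_joint_indep'[OF sfl sfl2 distX dYZ ip(1)])
  define sid where "sid x y z = sidnr_R (alpha j) A C DR PTt (dSR powr tau * sigR2) PSbar Iitc dSD tau x y z" for x y z
  define S where "S = {p :: real \<times> real \<times> real. psi < sid (fst p) (fst (snd p)) (snd (snd p))}"
  have Sm0: "{p \<in> space (lborel \<Otimes>\<^sub>M (lborel \<Otimes>\<^sub>M lborel)). psi < sid (fst p) (fst (snd p)) (snd (snd p))}
      \<in> sets (lborel \<Otimes>\<^sub>M (lborel \<Otimes>\<^sub>M lborel))"
    unfolding sid_def sidnr_R_def source_power_def Let_def by measurable
  have Sm: "S \<in> sets (lborel \<Otimes>\<^sub>M (lborel \<Otimes>\<^sub>M lborel))"
    using Sm0 by (simp add: S_def space_pair_measure)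
  define F where "F = (\<lambda>(x, q). ennreal (exponential_density lx x) * (case q of (y, z) \<Rightarrow> ennreal (exponential_density ly y) * ennreal (exponential_density lz z)))"
  define Ec where "Ec = {w \<in> space M. psi < sid (X w) (Y w) (Z w)}"
  have Ec_eq: "(\<lambda>w. (X w, (Y w, Z w))) -` S \<inter> space M = Ec"
    by (auto simp: S_def Ec_def)
  have Ec_sets: "Ec \<in> sets M"
    unfolding Ec_eq[symmetric] by (rule measurable_sets[OF distributed_measurable[OF dXYZ] Sm])
  have em1: "emeasure M Ec = (\<integral>\<^sup>+p. F p * indicator S p \<partial>(lborel \<Otimes>\<^sub>M (lborel \<Otimes>\<^sub>M lborel)))"
    using distributed_emeasure[OF dXYZ Sm] by (simp add: Ec_eq F_def)
  have Fm: "(\<lambda>p. F p * indicator S p) \<in> borel_measurable (lborel \<Otimes>\<^sub>M (lborel \<Otimes>\<^sub>M lborel))"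
    using distributed_borel_measurable[OF dXYZ] Sm unfolding F_def by measurable
  have pst: "pair_sigma_finite (lborel :: real measure) (lborel \<Otimes>\<^sub>M lborel :: (real \<times> real) measure)"
    by (simp add: pair_sigma_finite_def sfl sfl2)
  have em2: "emeasure M Ec = (\<integral>\<^sup>+q. (\<integral>\<^sup>+x. F (x, q) * indicator S (x, q) \<partial>lborel) \<partial>(lborel \<Otimes>\<^sub>M lborel))"
    using em1 pair_sigma_finite.nn_integral_snd[OF pst Fm] by simp
  define G where "G y z = L + (if y \<le> LamS then KD * z + MD else y * (KU * z + MU))" for y z :: real
  define H where "H y z = ennreal (exponential_density ly y) * ennreal (exponential_density lz z)
      * ennreal (if y = 0 then 0 else exp (- (G y z) * lx))" for y z :: real
  have Geq: "C * psi / (alpha j - A * psi) + (if y \<le> Iitc * dSD powr tau / PSbar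
       then DR * PTt * psi / (PSbar * (alpha j - A * psi)) * z + psi * (dSR powr tau * sigR2) / (PSbar * (alpha j - A * psi))
       else y * (DR * PTt * psi / (Iitc * dSD powr tau * (alpha j - A * psi)) * z + psi * (dSR powr tau * sigR2) / (Iitc * dSD powr tau * (alpha j - A * psi))))
      = G y z" for y z
    by (simp add: G_def L_def KD_def MD_def KU_def MU_def LamS_def mult.assoc)
  have Gnn: "0 \<le> G y z" if "0 < y" "0 \<le> z" for y z
    unfolding G_def using that Lnn KDnn MDnn KUpos MUnn
    by (auto intro!: add_nonneg_nonneg mult_nonneg_nonneg)
  have inner: "(\<integral>\<^sup>+x. F (x, (y, z)) * indicator S (x, (y, z)) \<partial>lborel) = H y z" for y z
  proof (cases "y < 0 \<or> z < 0")
    case True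
    then have e: "(\<lambda>x. F (x, (y, z)) * indicator S (x, (y, z))) = (\<lambda>x. 0)"
      by (auto simp: F_def exponential_density_def fun_eq_iff)
    moreover have "H y z = 0" using True by (auto simp: H_def exponential_density_def)
    ultimately show ?thesis by (simp only: e nn_integral_const mult_zero_left)
  next
    case False
    then have y0: "0 \<le> y" and z0: "0 \<le> z" by auto
    show ?thesis
    proof (cases "y = 0")
      case True
      have "sid x y z = 0" for x
        using True powers by (simp add: sid_def sidnr_R_def source_power_def Let_def)
      then have e: "(\<lambda>x. F (x, (y, z)) * indicator S (x, (y, z))) = (\<lambda>x. 0)"
        using psi_pos by (auto simp: S_def indicator_def fun_eq_iff)
      moreover have "H y z = 0" using True by (auto simp: H_def)
      ultimately show ?thesis by (simp only: e nn_integral_const mult_zero_left)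
    next
      case False
      then have ypos: "0 < y" using y0 by simp
      let ?K = "ennreal (exponential_density ly y) * ennreal (exponential_density lz z)"
      have pt: "F (x, (y, z)) * indicator S (x, (y, z)) = ?K * (ennreal (exponential_density lx x) * indicator {G y z<..} x)" for x
      proof (cases "x < 0")
        case True
        then show ?thesis by (simp add: F_def exponential_density_def)
      next
        case False
        have "psi < sid x y z \<longleftrightarrow> G y z < x"
          using event_equiv[OF Apos Cnn less_imp_le[OF DRpos] less_imp_le[OF PTtpos] Npos powers(2) P0pos psi_pos dpos[simplified] ypos z0, of x] False
          unfolding sid_def Geq by simp
        then have "indicator S (x, (y, z)) = (indicator {G y z<..} x :: ennreal)"
          by (simp add: S_def indicator_def)
        then show ?thesis by (simp add: F_def mult_ac)
      qed
      have "(\<integral>\<^sup>+x. F (x, (y, z)) * indicator S (x, (y, z)) \<partial>lborel)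
          = ?K * (\<integral>\<^sup>+x. ennreal (exponential_density lx x) * indicator {G y z<..} x \<partial>lborel)"
        unfolding pt by (rule nn_integral_cmult) simp
      also have "\<dots> = ?K * ennreal (exp (- G y z * lx))"
        using exp_tail[OF lpos(1) Gnn[OF ypos z0]] by simp
      finally show ?thesis using False by (simp add: H_def)
    qed
  qed
  have Hm: "(\<lambda>q. H (fst q) (snd q)) \<in> borel_measurable (lborel \<Otimes>\<^sub>M lborel)"
    unfolding H_def G_def by measurable
  have em3: "emeasure M Ec = (\<integral>\<^sup>+y. (\<integral>\<^sup>+z. H y z \<partial>lborel) \<partial>lborel)"
  proof -
    have "(\<integral>\<^sup>+q. (\<integral>\<^sup>+x. F (x, q) * indicator S (x, q) \<partial>lborel) \<partial>(lborel \<Otimes>\<^sub>M lborel))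
        = (\<integral>\<^sup>+q. H (fst q) (snd q) \<partial>(lborel \<Otimes>\<^sub>M lborel))"
    proof (rule nn_integral_cong)
      fix q :: "real \<times> real"
      show "(\<integral>\<^sup>+x. F (x, q) * indicator S (x, q) \<partial>lborel) = H (fst q) (snd q)"
        using inner[of "fst q" "snd q"] by simp
    qed
    then show ?thesis using em2 lborel.nn_integral_fst[OF Hm] by simp
  qed
  define T0 where "T0 = exp (- (L + MD) * lx) * (lz / (lz + lx * KD))"
  define Tf where "Tf y = exp (- (L + y * MU) * lx) * (lz / (lz + lx * KU * y))" for y :: real
  have T0nn: "0 \<le> T0" unfolding T0_def using lpos KDnn by (intro mult_nonneg_nonneg divide_nonneg_pos) (auto intro!: add_pos_nonneg)
  have zint: "(\<integral>\<^sup>+z. H y z \<partial>lborel) = ennreal (exponential_density ly y)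
      * (ennreal T0 * indicator {0<..LamS} y + ennreal (Tf y) * indicator {LamS<..} y)" for y
  proof (cases "y \<le> 0")
    case True
    have e: "(\<lambda>z. H y z) = (\<lambda>z. 0)"
      using True by (auto simp: H_def exponential_density_def fun_eq_iff)
    have "indicator {0<..LamS} y = (0::ennreal)" "indicator {LamS<..} y = (0::ennreal)"
      using True LamSpos by (auto simp: indicator_def)
    then show ?thesis by (simp only: e nn_integral_const mult_zero_left) simp
  next
    case False
    then have ypos: "0 < y" by simp
    have gen: "(\<integral>\<^sup>+z. H y z \<partial>lborel) = ennreal (exponential_density ly y) * ennreal (e * (lz / (lz + c)))"
      if ee: "\<And>z. exp (- G y z * lx) = e * exp (- c * z)" and e0: "0 \<le> e" and c0: "0 \<le> c" for e c
    proof -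
      have "\<And>z. H y z = (ennreal (exponential_density ly y) * ennreal e) * (ennreal (exponential_density lz z) * ennreal (exp (- c * z)))"
      proof -
        fix z
        have "H y z = ennreal (exponential_density ly y) * ennreal (exponential_density lz z) * ennreal (e * exp (- c * z))"
          by (subst ee[symmetric]) (use ypos in \<open>simp add: H_def\<close>)
        then show "H y z = (ennreal (exponential_density ly y) * ennreal e) * (ennreal (exponential_density lz z) * ennreal (exp (- c * z)))"
          using e0 by (simp add: ennreal_mult' mult_ac)
      qed
      then have "(\<integral>\<^sup>+z. H y z \<partial>lborel) = (ennreal (exponential_density ly y) * ennreal e) * (\<integral>\<^sup>+z. ennreal (exponential_density lz z) * ennreal (exp (- c * z)) \<partial>lborel)"
        by (simp add: nn_integral_cmult)
      also have "\<dots> = (ennreal (exponential_density ly y) * ennreal e) * ennreal (lz / (lz + c))"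
        using exp_laplace[OF lpos(3) c0] by simp
      also have "\<dots> = ennreal (exponential_density ly y) * ennreal (e * (lz / (lz + c)))"
        by (simp only: ennreal_mult'[OF e0] mult_ac)
      finally show ?thesis .
    qed
    show ?thesis
    proof (cases "y \<le> LamS")
      case True
      have "(\<integral>\<^sup>+z. H y z \<partial>lborel) = ennreal (exponential_density ly y) * ennreal T0"
        unfolding T0_def
      proof (rule gen)
        fix z
        show "exp (- G y z * lx) = exp (- (L + MD) * lx) * exp (- (lx * KD) * z)"
          using True by (simp add: G_def exp_add[symmetric] algebra_simps)
      qed (use lpos KDnn in auto)
      then show ?thesis using True ypos by (simp add: indicator_def)
    next
      case False
      have "(\<integral>\<^sup>+z. H y z \<partial>lborel) = ennreal (exponential_density ly y) * ennreal (Tf y)"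
        unfolding Tf_def
      proof (rule gen)
        fix z
        show "exp (- G y z * lx) = exp (- (L + y * MU) * lx) * exp (- (lx * KU * y) * z)"
          using False by (simp add: G_def exp_add[symmetric] algebra_simps)
      qed (use lpos KUpos ypos in auto)
      then show ?thesis using False ypos by (simp add: indicator_def)
    qed
  qed
  define K0 where "K0 = ly * lz * exp (- (L * lx)) / (lx * KU)"
  define cc where "cc = ly + lx * MU"
  define aa where "aa = lz / (lx * KU)"
  have ccpos: "0 < cc" unfolding cc_def using lpos MUnn by (simp add: add_pos_nonneg)
  have aapos: "0 < aa" unfolding aa_def using lpos KUpos by simp
  have K0nn: "0 \<le> K0" unfolding K0_def using lpos KUpos by simp
  define V where "V = T0 * (1 - exp (- LamS * ly)) + K0 * (exp (cc * aa) * (- Ei (- (cc * (LamS + aa)))))"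
  have yint: "(\<integral>\<^sup>+y. ennreal (exponential_density ly y)
      * (ennreal T0 * indicator {0<..LamS} y + ennreal (Tf y) * indicator {LamS<..} y) \<partial>lborel) = ennreal V"
  proof -
    have Ei0: "0 \<le> - Ei (- (cc * (LamS + aa)))"
      using Ei_neg_nonpos[of "cc * (LamS + aa)"] ccpos aapos LamSpos by simp
    have ex1: "0 \<le> 1 - exp (- LamS * ly)" using LamSpos lpos by simp
    have "(\<integral>\<^sup>+y. ennreal (exponential_density ly y)
      * (ennreal T0 * indicator {0<..LamS} y + ennreal (Tf y) * indicator {LamS<..} y) \<partial>lborel)
      = (\<integral>\<^sup>+y. ennreal T0 * (ennreal (exponential_density ly y) * indicator {0<..LamS} y)
           + ennreal (exponential_density ly y) * ennreal (Tf y) * indicator {LamS<..} y \<partial>lborel)"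
      by (rule nn_integral_cong) (simp add: distrib_left mult_ac)
    also have "\<dots> = (\<integral>\<^sup>+y. ennreal T0 * (ennreal (exponential_density ly y) * indicator {0<..LamS} y) \<partial>lborel)
           + (\<integral>\<^sup>+y. ennreal (exponential_density ly y) * ennreal (Tf y) * indicator {LamS<..} y \<partial>lborel)"
      unfolding Tf_def by (rule nn_integral_add) measurable
    also have "(\<integral>\<^sup>+y. ennreal T0 * (ennreal (exponential_density ly y) * indicator {0<..LamS} y) \<partial>lborel)
        = ennreal T0 * ennreal (1 - exp (- LamS * ly))"
    proof -
      have "(\<integral>\<^sup>+y. ennreal T0 * (ennreal (exponential_density ly y) * indicator {0<..LamS} y) \<partial>lborel)
          = ennreal T0 * (\<integral>\<^sup>+y. ennreal (exponential_density ly y) * indicator {0<..LamS} y \<partial>lborel)"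
        by (rule nn_integral_cmult) simp
      also have "(\<integral>\<^sup>+y. ennreal (exponential_density ly y) * indicator {0<..LamS} y \<partial>lborel)
          = (\<integral>\<^sup>+y. ennreal (exponential_density ly y) * indicator {..LamS} y \<partial>lborel)"
      proof (rule nn_integral_cong_AE)
        show "AE y in lborel. ennreal (exponential_density ly y) * indicator {0<..LamS} y
            = ennreal (exponential_density ly y) * indicator {..LamS} y"
          using AE_lborel_singleton[of 0]
          by eventually_elim (auto simp: indicator_def exponential_density_def)
      qed
      also have "\<dots> = ennreal (1 - exp (- LamS * ly))"
        by (rule exp_le[OF lpos(2) less_imp_le[OF LamSpos]])
      finally show ?thesis .
    qed
    also have "(\<integral>\<^sup>+y. ennreal (exponential_density ly y) * ennreal (Tf y) * indicator {LamS<..} y \<partial>lborel)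
        = ennreal K0 * ennreal (exp (cc * aa) * (- Ei (- (cc * (LamS + aa)))))"
    proof -
      have pt: "ennreal (exponential_density ly y) * ennreal (Tf y) * indicator {LamS<..} y
          = ennreal K0 * (ennreal (exp (- cc * y) / (y + aa)) * indicator {LamS<..} y)" for y
      proof (cases "LamS < y")
        case True
        then have ypos: "0 < y" using LamSpos by simp
        have e1: "exp (- y * ly) * exp (- (L + y * MU) * lx) = exp (- (L * lx)) * exp (- cc * y)"
          by (simp add: exp_add[symmetric] cc_def algebra_simps)
        have d1: "lz + lx * KU * y = lx * KU * (y + aa)"
          unfolding aa_def using lpos KUpos by (simp add: field_simps)
        have "exponential_density ly y * Tf y = ly * (exp (- y * ly) * exp (- (L + y * MU) * lx)) * (lz / (lz + lx * KU * y))"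
          using ypos by (simp add: exponential_density_def Tf_def mult_ac)
        also have "\<dots> = K0 * (exp (- cc * y) / (y + aa))"
          unfolding e1 d1 K0_def using lpos KUpos ypos aapos by (simp add: field_simps)
        finally have r: "exponential_density ly y * Tf y = K0 * (exp (- cc * y) / (y + aa))" .
        have Tfnn: "0 \<le> Tf y" unfolding Tf_def using lpos KUpos ypos
          by (intro mult_nonneg_nonneg divide_nonneg_pos) (auto intro!: add_pos_nonneg)
        have "ennreal (exponential_density ly y) * ennreal (Tf y) = ennreal (K0 * (exp (- cc * y) / (y + aa)))"
          using r Tfnn by (simp add: ennreal_mult'[symmetric] exponential_density_nonneg[OF lpos(2)] ennreal_mult[symmetric])
        also have "\<dots> = ennreal K0 * ennreal (exp (- cc * y) / (y + aa))"
          by (rule ennreal_mult'[OF K0nn])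
        finally show ?thesis using True by simp
      qed simp
      have "(\<integral>\<^sup>+y. ennreal (exponential_density ly y) * ennreal (Tf y) * indicator {LamS<..} y \<partial>lborel)
          = ennreal K0 * (\<integral>\<^sup>+y. ennreal (exp (- cc * y) / (y + aa)) * indicator {LamS<..} y \<partial>lborel)"
        unfolding pt by (rule nn_integral_cmult) measurable
      also have "\<dots> = ennreal K0 * ennreal (exp (cc * aa) * (- Ei (- (cc * (LamS + aa)))))"
        using ei_shift[OF ccpos aapos less_imp_le[OF LamSpos]] by simp
      finally show ?thesis .
    qed
    also have "ennreal T0 * ennreal (1 - exp (- LamS * ly)) + ennreal K0 * ennreal (exp (cc * aa) * (- Ei (- (cc * (LamS + aa)))))
        = ennreal V"
    proof -
      have p1: "0 \<le> T0 * (1 - exp (- LamS * ly))" using T0nn ex1 by simp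
      have p2: "0 \<le> K0 * (exp (cc * aa) * (- Ei (- (cc * (LamS + aa)))))" using K0nn Ei0 by (intro mult_nonneg_nonneg) auto
      show ?thesis by (simp only: V_def ennreal_plus[OF p1 p2] ennreal_mult'[OF T0nn] ennreal_mult'[OF K0nn])
    qed
    finally show ?thesis .
  qed
  have Vnn: "0 \<le> V"
    unfolding V_def using T0nn K0nn Ei_neg_nonpos[of "cc * (LamS + aa)"] ccpos aapos LamSpos lpos
    by (intro add_nonneg_nonneg mult_nonneg_nonneg) auto
  have emV: "emeasure M Ec = ennreal V"
    using em3 zint yint by simp
  have mV: "measure M Ec = V"
    using emV Vnn P.emeasure_eq_measure[of Ec] by simp
  have compl: "{w \<in> space M. sidnr_R (alpha j) A C DR PTt (dSR powr tau * sigR2) PSbar Iitc dSD tau (X w) (Y w) (Z w) \<le> psi}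
      = space M - Ec"
    by (auto simp: Ec_def sid_def)
  have mx: "muS * xiS = cc * (LamS + aa)"
    unfolding muS_def xiS_def cc_def aa_def using lpos KUpos by (simp add: field_simps)
  have ex: "exp (- LamS * (ly + lx * MU) - lx * L + muS * xiS) = exp (- (L * lx)) * exp (cc * aa)"
    unfolding mx by (simp add: exp_add[symmetric] cc_def algebra_simps)
  have "measure M (space M - Ec) = 1 - V"
    using P.prob_compl[OF Ec_sets] mV by simp
  also have "1 - V = 1 - lz * exp (- lx * (MD + L)) / (lz + lx * KD) * (1 - exp (- ly * LamS))
             + ly * lz * Ei (- muS * xiS) / (lx * KU)
               * exp (- LamS * (ly + lx * MU) - lx * L + muS * xiS)"
  proof -
    have ei: "Ei (- muS * xiS) = Ei (- (cc * (LamS + aa)))" using mx by simp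
    have e2: "exp (- lx * (MD + L)) = exp (- (L + MD) * lx)" by (simp add: algebra_simps)
    show ?thesis unfolding ex ei V_def T0_def K0_def e2 using lpos KUpos
      by (simp add: field_simps)
  qed
  finally show ?thesis using compl by simp
qed

end
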